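(* Let $1\le p<\infty$ and $W\in\mathbb{W}$. Then the Garling function space $G_{W,p}(0,\infty)$ is complete, i.e. a Banach space.
   Context: $\lambda$ is Lebesgue measure on $(0,\infty)$ with its usual order, and $\Lambda$ is the family of Lebesgue-measurable subsets of $(0,\infty)$. For $E,F\in\Lambda$, $\mathbb{MO}(E,F)$ is the set of strictly increasing bijections $m:E\to F$ such that $m$ and $m^{-1}$ are measure-preserving. $\mathbb{W}$ is the set of nonincreasing measurable $W:(0,\infty)\to(0,\infty)$ with (W1) $\lim_{t\to\infty}W(t)=0$, (W2) $\int_0^\infty W(t)\,dt=\infty$, (W3) $\int_0^1W(t)\,dt<\infty$. For measurable $f:(0,\infty)\to[0,\infty]$, $\rho_G(f)=\sup\{(\int_E (f\circ m)(t)^pW(t)\,dt)^{1/p}: E,F\in\Lambda,\ m\in\mathbb{MO}(E,F)\}$; $G_{W,p}(0,\infty)$ is the space of a.e.-classes of measurable $f:(0,\infty)\to[-\infty,\infty]$ with $\|f\|_G:=\rho_G(|f|)<\infty$. *)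

theory Defs
  imports "HOL-Analysis.Analysis"
begin

definition LambdaSets :: "real set set" where
  "LambdaSets = {E. E \<in> sets lebesgue \<and> E \<subseteq> {0<..}}"

definition measure_pres :: "'a measure \<Rightarrow> 'b measure \<Rightarrow> ('a \<Rightarrow> 'b) \<Rightarrow> bool" where
  "measure_pres M N f \<longleftrightarrow> f \<in> measurable M N \<and> distr M N f = N"

definition MO :: "real set \<Rightarrow> real set \<Rightarrow> (real \<Rightarrow> real) set" where
  "MO E F = {m. strict_mono_on E m \<and> bij_betw m E F \<and>
     measure_pres (restrict_space lebesgue E) (restrict_space lebesgue F) m \<and>
     measure_pres (restrict_space lebesgue F) (restrict_space lebesgue E) (inv_into E m)}"

definition WClass :: "(real \<Rightarrow> real) set" where
  "WClass = {W. W \<in> borel_measurable (restrict_space lebesgue {0<..}) \<and>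
     (\<forall>s t. 0 < s \<and> s \<le> t \<longrightarrow> W t \<le> W s) \<and>
     (\<forall>t>0. W t > 0) \<and>
     (W \<longlongrightarrow> 0) at_top \<and>
     (\<integral>\<^sup>+ t. ennreal (W t) * indicator {0<..} t \<partial>lebesgue) = \<infinity> \<and>
     (\<integral>\<^sup>+ t. ennreal (W t) * indicator {0<..1} t \<partial>lebesgue) < \<infinity>}"

(* p-th power of rho_G(|f|): sup over E,F in Lambda, m in MO(E,F) of
   int_E |f(m t)|^p W(t) dt  (sup of p-th roots = p-th root of the sup) *)
definition rhoGpow :: "(real \<Rightarrow> real) \<Rightarrow> real \<Rightarrow> (real \<Rightarrow> real) \<Rightarrow> ennreal" where
  "rhoGpow W p f = (SUP (E, F, m) \<in> {(E, F, m). E \<in> LambdaSets \<and> F \<in> LambdaSets \<and> m \<in> MO E F}.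
      \<integral>\<^sup>+ t. ennreal (\<bar>f (m t)\<bar> powr p * W t) * indicator E t \<partial>lebesgue)"

definition Gspace :: "(real \<Rightarrow> real) \<Rightarrow> real \<Rightarrow> (real \<Rightarrow> real) set" where
  "Gspace W p = {f. f \<in> borel_measurable (restrict_space lebesgue {0<..}) \<and> rhoGpow W p f < \<infinity>}"

definition Gnorm :: "(real \<Rightarrow> real) \<Rightarrow> real \<Rightarrow> (real \<Rightarrow> real) \<Rightarrow> real" where
  "Gnorm W p f = enn2real (rhoGpow W p f) powr (1 / p)"

end

theory Submission
  imports Defs
begin

abbreviation M0 :: "real measure" where "M0 \<equiv> restrict_space lebesgue {0<..}"

definition Idx :: "(real set \<times> real set \<times> (real \<Rightarrow> real)) set" where
  "Idx = {(E, F, m). E \<in> LambdaSets \<and> F \<in> LambdaSets \<and> m \<in> MO E F}"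

lemma rho_def2: "rhoGpow W p f = (SUP (E, F, m) \<in> Idx.
      \<integral>\<^sup>+ t. ennreal (\<bar>f (m t)\<bar> powr p * W t) * indicator E t \<partial>lebesgue)"
  unfolding rhoGpow_def Idx_def by simp

lemma comp_meas:
  assumes a: "a \<in> borel_measurable M0" and W: "W \<in> borel_measurable M0"
    and "(E, F, m) \<in> Idx"
  shows "(\<lambda>t. ennreal (\<bar>a (m t)\<bar> powr p * W t)) \<in> borel_measurable (restrict_space lebesgue E)"
proof -
  from assms(3) have E: "E \<subseteq> {0<..}" and F: "F \<subseteq> {0<..}"
    and m: "m \<in> measurable (restrict_space lebesgue E) (restrict_space lebesgue F)"
    by (auto simp: Idx_def LambdaSets_def MO_def measure_pres_def)
  have aF: "a \<in> borel_measurable (restrict_space lebesgue F)"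
    using measurable_restrict_mono[OF a F] .
  have am: "(\<lambda>t. a (m t)) \<in> borel_measurable (restrict_space lebesgue E)"
    using measurable_compose[OF m aF] .
  have WE: "W \<in> borel_measurable (restrict_space lebesgue E)"
    using measurable_restrict_mono[OF W E] .
  show ?thesis using am WE by measurable
qed

lemma int_restrict:
  assumes "(E, F, m) \<in> Idx"
  shows "(\<integral>\<^sup>+ t. h t * indicator E t \<partial>lebesgue) = (\<integral>\<^sup>+ t. h t \<partial>restrict_space lebesgue E)"
proof -
  from assms have "E \<in> sets lebesgue" by (auto simp: Idx_def LambdaSets_def)
  then show ?thesis by (subst nn_integral_restrict_space) auto
qed

lemma id_Idx: "({0<..}, {0<..}, \<lambda>x. x) \<in> Idx"
proof -
  have inv: "\<And>x. x \<in> {0::real<..} \<Longrightarrow> inv_into {0<..} (\<lambda>x. x) x = x"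
    by (simp add: inv_into_f_f)
  have "(\<lambda>x. x) \<in> MO {0<..} {0<..}"
    unfolding MO_def measure_pres_def
  proof (intro CollectI conjI)
    show "strict_mono_on {0<..} (\<lambda>x::real. x)" by (simp add: strict_mono_on_def)
    show "bij_betw (\<lambda>x::real. x) {0<..} {0<..}" by (simp add: bij_betw_def)
    show "(\<lambda>x. x) \<in> restrict_space lebesgue {0::real<..} \<rightarrow>\<^sub>M restrict_space lebesgue {0<..}" by simp
    show "distr M0 M0 (\<lambda>x. x) = M0" by simp
    have "inv_into {0<..} (\<lambda>x. x) \<in> M0 \<rightarrow>\<^sub>M M0 \<longleftrightarrow> (\<lambda>x. x) \<in> M0 \<rightarrow>\<^sub>M M0"
      by (rule measurable_cong) (simp add: inv)
    then show "inv_into {0<..} (\<lambda>x. x) \<in> M0 \<rightarrow>\<^sub>M M0" by simp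
    have "distr M0 M0 (inv_into {0<..} (\<lambda>x. x)) = distr M0 M0 (\<lambda>x. x)"
      by (rule distr_cong) (auto simp: inv)
    then show "distr M0 M0 (inv_into {0<..} (\<lambda>x. x)) = M0" by simp
  qed
  then show ?thesis by (simp add: Idx_def LambdaSets_def)
qed

lemma I_le_rho:
  "(\<integral>\<^sup>+ t. ennreal (\<bar>h t\<bar> powr p * W t) \<partial>M0) \<le> rhoGpow W p h"
proof -
  have "(\<integral>\<^sup>+ t. ennreal (\<bar>h t\<bar> powr p * W t) \<partial>M0) =
     (\<integral>\<^sup>+ t. ennreal (\<bar>h t\<bar> powr p * W t) * indicator {0<..} t \<partial>lebesgue)"
    using int_restrict[OF id_Idx] by simp
  also have "\<dots> \<le> rhoGpow W p h"
    unfolding rho_def2 using id_Idx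
    by (rule SUP_upper2) simp
  finally show ?thesis .
qed

lemma idx_le_rho:
  assumes "(E, F, m) \<in> Idx"
  shows "(\<integral>\<^sup>+ t. ennreal (\<bar>h (m t)\<bar> powr p * W t) \<partial>restrict_space lebesgue E) \<le> rhoGpow W p h"
  unfolding rho_def2 int_restrict[OF assms, symmetric] using assms
  by (rule SUP_upper2) simp

lemma pow_tri:
  fixes x a b p :: real
  assumes "p \<ge> 1" "\<bar>x\<bar> \<le> \<bar>a\<bar> + \<bar>b\<bar>"
  shows "\<bar>x\<bar> powr p \<le> 2 powr p * (\<bar>a\<bar> powr p + \<bar>b\<bar> powr p)"
proof -
  have "\<bar>x\<bar> \<le> 2 * max \<bar>a\<bar> \<bar>b\<bar>" using assms by auto
  then have "\<bar>x\<bar> powr p \<le> (2 * max \<bar>a\<bar> \<bar>b\<bar>) powr p"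
    using assms by (intro powr_mono2) auto
  also have "\<dots> = 2 powr p * max \<bar>a\<bar> \<bar>b\<bar> powr p" by (simp add: powr_mult)
  also have "max \<bar>a\<bar> \<bar>b\<bar> powr p \<le> \<bar>a\<bar> powr p + \<bar>b\<bar> powr p"
    by (cases "\<bar>a\<bar> \<le> \<bar>b\<bar>") (auto simp: max_def)
  finally show ?thesis by (simp add: mult_left_mono)
qed

lemma rho_tri:
  assumes p: "p \<ge> 1" and W: "W \<in> WClass"
    and a: "a \<in> borel_measurable M0" and b: "b \<in> borel_measurable M0"
    and h: "\<And>t. \<bar>h t\<bar> \<le> \<bar>a t\<bar> + \<bar>b t\<bar>"
  shows "rhoGpow W p h \<le> ennreal (2 powr p) * (rhoGpow W p a + rhoGpow W p b)"
proof -
  have Wm: "W \<in> borel_measurable M0" and Wp: "\<And>t. t > 0 \<Longrightarrow> W t > 0"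
    using W by (auto simp: WClass_def)
  show ?thesis unfolding rho_def2[of W p h]
  proof (rule SUP_least, clarify)
    fix E F m assume i: "(E, F, m) \<in> Idx"
    then have E: "E \<subseteq> {0<..}" by (auto simp: Idx_def LambdaSets_def)
    let ?ME = "restrict_space lebesgue E"
    have "(\<integral>\<^sup>+ t. ennreal (\<bar>h (m t)\<bar> powr p * W t) \<partial>?ME) \<le>
        (\<integral>\<^sup>+ t. ennreal (2 powr p) * (ennreal (\<bar>a (m t)\<bar> powr p * W t) + ennreal (\<bar>b (m t)\<bar> powr p * W t)) \<partial>?ME)"
    proof (rule nn_integral_mono)
      fix t assume "t \<in> space ?ME"
      then have "t > 0" using E by auto
      then have w: "W t \<ge> 0" using Wp[of t] by simp
      have "\<bar>h (m t)\<bar> powr p * W t \<le> 2 powr p * (\<bar>a (m t)\<bar> powr p + \<bar>b (m t)\<bar> powr p) * W t"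
        using pow_tri[OF p h] w by (intro mult_right_mono) auto
      then show "ennreal (\<bar>h (m t)\<bar> powr p * W t) \<le> ennreal (2 powr p) * (ennreal (\<bar>a (m t)\<bar> powr p * W t) + ennreal (\<bar>b (m t)\<bar> powr p * W t))"
        using w by (simp add: ennreal_mult[symmetric] ennreal_plus[symmetric] distrib_right distrib_left del: ennreal_plus)
    qed
    also have "\<dots> = ennreal (2 powr p) * ((\<integral>\<^sup>+ t. ennreal (\<bar>a (m t)\<bar> powr p * W t) \<partial>?ME) + (\<integral>\<^sup>+ t. ennreal (\<bar>b (m t)\<bar> powr p * W t) \<partial>?ME))"
      using comp_meas[OF a Wm i] comp_meas[OF b Wm i]
      by (simp add: nn_integral_cmult nn_integral_add)
    also have "\<dots> \<le> ennreal (2 powr p) * (rhoGpow W p a + rhoGpow W p b)"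
      by (intro mult_left_mono add_mono idx_le_rho[OF i]) auto
    finally show "(\<integral>\<^sup>+ t. ennreal (\<bar>h (m t)\<bar> powr p * W t) * indicator E t \<partial>lebesgue) \<le> ennreal (2 powr p) * (rhoGpow W p a + rhoGpow W p b)"
      by (simp add: int_restrict[OF i])
  qed
qed


lemma AE_transfer:
  assumes ae: "AE x in M0. P x" and i: "(E, F, m) \<in> Idx"
  shows "AE t in restrict_space lebesgue E. P (m t)"
proof -
  from i have E: "E \<subseteq> {0<..}" "E \<in> sets lebesgue" and F: "F \<subseteq> {0<..}" "F \<in> sets lebesgue"
    and mm: "m \<in> measurable (restrict_space lebesgue E) (restrict_space lebesgue F)"
    and md: "distr (restrict_space lebesgue E) (restrict_space lebesgue F) m = restrict_space lebesgue F"
    by (auto simp: Idx_def LambdaSets_def MO_def measure_pres_def)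
  from ae obtain N where N: "{x \<in> space M0. \<not> P x} \<subseteq> N" "emeasure M0 N = 0" "N \<in> sets M0"
    by (auto elim!: AE_E)
  have o: "{0::real<..} \<inter> space lebesgue \<in> sets lebesgue" by simp
  have NL: "N \<in> sets lebesgue" "N \<subseteq> {0<..}" using N(3) sets_restrict_space_iff[OF o] by auto
  have "emeasure lebesgue N = 0" using N(2) emeasure_restrict_space[OF o NL(2)] by simp
  have NF: "N \<inter> F \<in> sets (restrict_space lebesgue F)"
    using NL F by (subst sets_restrict_space_iff) auto
  have "emeasure lebesgue (N \<inter> F) \<le> emeasure lebesgue N" by (rule emeasure_mono) (use NL in auto)
  then have z: "emeasure lebesgue (N \<inter> F) = 0" using \<open>emeasure lebesgue N = 0\<close> by simp
  have "emeasure (restrict_space lebesgue F) (N \<inter> F) = 0"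
    using z F by (subst emeasure_restrict_space) auto
  then have "emeasure (restrict_space lebesgue E) (m -` (N \<inter> F) \<inter> space (restrict_space lebesgue E)) = 0"
    using emeasure_distr[OF mm NF] md by simp
  moreover have "m -` (N \<inter> F) \<inter> space (restrict_space lebesgue E) \<in> sets (restrict_space lebesgue E)"
    using measurable_sets[OF mm NF] .
  ultimately have nul: "m -` (N \<inter> F) \<inter> space (restrict_space lebesgue E) \<in> null_sets (restrict_space lebesgue E)"
    by auto
  show ?thesis
  proof (rule AE_I'[OF nul], rule subsetI)
    fix t assume "t \<in> {t \<in> space (restrict_space lebesgue E). \<not> P (m t)}"
    then have t: "t \<in> space (restrict_space lebesgue E)" "\<not> P (m t)" by auto
    have "m t \<in> space (restrict_space lebesgue F)" using measurable_space[OF mm t(1)] .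
    then have "m t \<in> F" by simp
    then have "m t \<in> space M0" using F by auto
    then have "m t \<in> N" using N(1) t(2) by auto
    then show "t \<in> m -` (N \<inter> F) \<inter> space (restrict_space lebesgue E)" using t(1) \<open>m t \<in> F\<close> by auto
  qed
qed


theorem mainTheorem8:
  fixes p :: real and W :: "real \<Rightarrow> real"
  assumes "1 \<le> p" and "W \<in> WClass"
  shows "\<forall>f :: nat \<Rightarrow> real \<Rightarrow> real.
           (\<forall>n. f n \<in> Gspace W p) \<and>
           (\<forall>e>0. \<exists>N. \<forall>m\<ge>N. \<forall>n\<ge>N. Gnorm W p (\<lambda>t. f m t - f n t) < e)
           \<longrightarrow> (\<exists>g \<in> Gspace W p. (\<lambda>n. Gnorm W p (\<lambda>t. f n t - g t)) \<longlonglongrightarrow> 0)"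
proof (intro allI impI, elim conjE)
  fix f :: "nat \<Rightarrow> real \<Rightarrow> real"
  assume fG: "\<forall>n. f n \<in> Gspace W p"
    and C: "\<forall>e>0. \<exists>N. \<forall>m\<ge>N. \<forall>n\<ge>N. Gnorm W p (\<lambda>t. f m t - f n t) < e"
  have p: "1 \<le> p" using assms by simp
  have Wm: "W \<in> borel_measurable M0" and Wp: "\<And>t. t > 0 \<Longrightarrow> W t > 0"
    using assms(2) by (auto simp: WClass_def)
  have fm: "\<And>n. f n \<in> borel_measurable M0" and ffin: "\<And>n. rhoGpow W p (f n) < \<infinity>"
    using fG by (auto simp: Gspace_def)
  have dfin: "rhoGpow W p (\<lambda>t. f m t - f n t) < \<infinity>" for m n
  proof -
    have "rhoGpow W p (\<lambda>t. f m t - f n t) \<le> ennreal (2 powr p) * (rhoGpow W p (f m) + rhoGpow W p (f n))"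
      by (rule rho_tri[OF p assms(2) fm fm]) auto
    also have "\<dots> < \<infinity>" using ffin[of m] ffin[of n]
      by (simp add: ennreal_mult_less_top less_top)
    finally show ?thesis .
  qed
  have cauchy: "\<exists>N. \<forall>m\<ge>N. \<forall>n\<ge>N. rhoGpow W p (\<lambda>t. f m t - f n t) < ennreal d" if d: "d > 0" for d
  proof -
    have dp: "d powr (1/p) > 0" using d by simp
    from C dp obtain N where N: "\<forall>m\<ge>N. \<forall>n\<ge>N. Gnorm W p (\<lambda>t. f m t - f n t) < d powr (1/p)"
      by blast
    show ?thesis
    proof (intro exI allI impI)
      fix m n assume mn: "N \<le> m" "N \<le> n"
      let ?r = "rhoGpow W p (\<lambda>t. f m t - f n t)"
      have lt: "enn2real ?r powr (1/p) < d powr (1/p)" using N mn by (simp add: Gnorm_def)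
      have "enn2real ?r < d"
      proof (rule ccontr)
        assume "\<not> enn2real ?r < d"
        then have "d powr (1/p) \<le> enn2real ?r powr (1/p)"
          using d p by (intro powr_mono2) auto
        then show False using lt by simp
      qed
      then show "?r < ennreal d"
        using dfin[of m n] proof -
        have "ennreal (enn2real ?r) = ?r" using dfin[of m n] by (intro ennreal_enn2real) simp
        moreover have "ennreal (enn2real ?r) < ennreal d" using \<open>enn2real ?r < d\<close> d by (intro ennreal_lessI) auto
        ultimately show ?thesis by simp
      qed
    qed
  qed
  define eps :: "nat \<Rightarrow> real" where "eps k = (1/2)^k / 2 powr (real k * p)" for k
  have eps_pos: "eps k > 0" for k by (simp add: eps_def)
  have "\<forall>k. \<exists>N. \<forall>m\<ge>N. \<forall>n\<ge>N. rhoGpow W p (\<lambda>t. f m t - f n t) < ennreal (eps k)"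
    using cauchy eps_pos by blast
  then obtain Nf where Nf: "\<And>k m n. m \<ge> Nf k \<Longrightarrow> n \<ge> Nf k \<Longrightarrow> rhoGpow W p (\<lambda>t. f m t - f n t) < ennreal (eps k)"
    by metis
  define r where "r = rec_nat (Nf 0) (\<lambda>k rk. max (Nf (Suc k)) (Suc rk))"
  have r0: "r 0 = Nf 0" and rS: "r (Suc k) = max (Nf (Suc k)) (Suc (r k))" for k
    by (simp_all add: r_def)
  have rN: "r k \<ge> Nf k" for k by (cases k) (auto simp: r0 rS)
  have rmono: "strict_mono r" unfolding strict_mono_Suc_iff by (simp add: rS less_max_iff_disj)
  have dk: "rhoGpow W p (\<lambda>t. f (r (Suc k)) t - f (r k) t) < ennreal (eps k)" for k
    apply (rule Nf) using rN[of k] rN[of "Suc k"] rmono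
    by (auto simp: rS)
  define D where "D k x = ennreal (2 powr (real k * p)) * ennreal (\<bar>f (r (Suc k)) x - f (r k) x\<bar> powr p * W x)" for k x
  have Dm: "D k \<in> borel_measurable M0" for k
    unfolding D_def using fm Wm by measurable
  have "(\<integral>\<^sup>+ x. (\<Sum>k. D k x) \<partial>M0) = (\<Sum>k. integral\<^sup>N M0 (D k))"
    by (rule nn_integral_suminf[OF Dm])
  also have "\<dots> \<le> (\<Sum>k. ennreal ((1/2)^k))"
  proof (rule suminf_le)
    fix k
    have "integral\<^sup>N M0 (D k) = ennreal (2 powr (real k * p)) *
        (\<integral>\<^sup>+ x. ennreal (\<bar>f (r (Suc k)) x - f (r k) x\<bar> powr p * W x) \<partial>M0)"
    proof -
      have "(\<lambda>x. ennreal (\<bar>f (r (Suc k)) x - f (r k) x\<bar> powr p * W x)) \<in> borel_measurable M0"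
        using fm Wm by measurable
      then show ?thesis unfolding D_def by (rule nn_integral_cmult)
    qed
    also have "\<dots> \<le> ennreal (2 powr (real k * p)) * ennreal (eps k)"
      using I_le_rho[of "\<lambda>t. f (r (Suc k)) t - f (r k) t" p W] dk[of k]
      by (intro mult_left_mono) auto
    also have "\<dots> = ennreal ((1/2)^k)"
      by (simp add: eps_def ennreal_mult[symmetric])
    finally show "integral\<^sup>N M0 (D k) \<le> ennreal ((1/2)^k)" .
  qed auto
  also have "\<dots> = ennreal 2"
    by (rule suminf_ennreal_eq) (auto simp: geometric_sums[of "1/2::real", simplified])
  finally have "(\<integral>\<^sup>+ x. (\<Sum>k. D k x) \<partial>M0) \<noteq> \<infinity>" by (auto simp: top_unique)
  then have aeD: "AE x in M0. (\<Sum>k. D k x) \<noteq> \<infinity>"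
    by (intro nn_integral_noteq_infinite) (use Dm in measurable)
  have aeconv: "AE x in M0. convergent (\<lambda>k. f (r k) x)"
    using aeD
  proof (rule AE_mp, intro AE_I2 impI)
    fix x assume x: "x \<in> space M0" and S: "(\<Sum>k. D k x) \<noteq> \<infinity>"
    let ?d = "\<lambda>k. f (r (Suc k)) x - f (r k) x"
    have Wx: "W x > 0" using x Wp by auto
    define c where "c k = 2 powr (real k * p) * (\<bar>?d k\<bar> powr p * W x)" for k
    have c0: "c k \<ge> 0" for k using Wx by (simp add: c_def)
    have "D k x = ennreal (c k)" for k using Wx by (simp add: D_def c_def ennreal_mult)
    then have "summable c" using S c0 by (intro summable_suminf_not_top) auto
    then have "c \<longlonglongrightarrow> 0" by (rule summable_LIMSEQ_zero)
    then have ev: "eventually (\<lambda>k. c k < W x) sequentially"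
      using Wx by (rule order_tendstoD)
    have "eventually (\<lambda>k. norm (?d k) \<le> (1/2)^k) sequentially"
      using ev
    proof (rule eventually_mono)
      fix k assume ck: "c k < W x"
      have eq: "c k = (2^k * \<bar>?d k\<bar>) powr p * W x"
        proof -
        have "2 powr (real k * p) = (2^k) powr p"
          by (simp add: powr_powr[symmetric] powr_realpow)
        moreover have "(2^k * \<bar>?d k\<bar>) powr p = (2^k) powr p * \<bar>?d k\<bar> powr p"
          by (simp add: powr_mult)
        ultimately show ?thesis by (simp add: c_def mult.assoc)
      qed
      have "(2^k * \<bar>?d k\<bar>) powr p < 1" using ck Wx unfolding eq by simp
      have "2^k * \<bar>?d k\<bar> < 1"
        proof (rule ccontr)
        assume "\<not> 2^k * \<bar>?d k\<bar> < 1"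
        then have "1 \<le> (2^k * \<bar>?d k\<bar>) powr p" using p by (intro ge_one_powr_ge_zero) auto
        then show False using \<open>(2^k * \<bar>?d k\<bar>) powr p < 1\<close> by simp
      qed
      then show "norm (?d k) \<le> (1/2)^k" by (simp add: field_simps)
    qed
    then have "summable ?d" by (rule summable_comparison_test_ev) simp
    then have "convergent (\<lambda>n. \<Sum>k<n. ?d k)" by (simp add: summable_iff_convergent)
    then have "convergent (\<lambda>n. f (r 0) x + (\<Sum>k<n. ?d k))"
      by (intro convergent_add convergent_const)
    moreover have "f (r 0) x + (\<Sum>k<n. ?d k) = f (r n) x" for n
      using sum_lessThan_telescope[of "\<lambda>k. f (r k) x" n] by simp
    ultimately show "convergent (\<lambda>k. f (r k) x)" by simp
  qed
  define g where "g x = lim (\<lambda>k. f (r k) x)" for x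
  have gm: "g \<in> borel_measurable M0" unfolding g_def using fm by measurable
  have glim: "AE x in M0. (\<lambda>k. f (r k) x) \<longlonglongrightarrow> g x"
    using aeconv by eventually_elim (simp add: g_def convergent_LIMSEQ_iff)
  have main: "\<exists>N. \<forall>n\<ge>N. rhoGpow W p (\<lambda>t. f n t - g t) \<le> ennreal e" if e: "e > 0" for e
  proof -
    obtain N where N: "\<And>m n. m \<ge> N \<Longrightarrow> n \<ge> N \<Longrightarrow> rhoGpow W p (\<lambda>t. f m t - f n t) < ennreal e"
      using cauchy[OF e] by blast
    show ?thesis
    proof (intro exI allI impI)
      fix n assume n: "N \<le> n"
      show "rhoGpow W p (\<lambda>t. f n t - g t) \<le> ennreal e"
        unfolding rho_def2
      proof (rule SUP_least, clarify)
        fix E F m assume i: "(E, F, m) \<in> Idx"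
        let ?ME = "restrict_space lebesgue E"
        let ?u = "\<lambda>k t. ennreal (\<bar>f n (m t) - f (r k) (m t)\<bar> powr p * W t)"
        have um: "?u k \<in> borel_measurable ?ME" for k
          using comp_meas[of "\<lambda>x. f n x - f (r k) x" W E F m p] fm Wm i by simp
        have ae: "AE t in ?ME. (\<lambda>k. f (r k) (m t)) \<longlonglongrightarrow> g (m t)"
          by (rule AE_transfer[OF glim i])
        have ae2: "AE t in ?ME. ennreal (\<bar>f n (m t) - g (m t)\<bar> powr p * W t) = liminf (\<lambda>k. ?u k t)"
          using ae
        proof eventually_elim
          case (elim t)
          have "(\<lambda>k. \<bar>f n (m t) - f (r k) (m t)\<bar> powr p * W t) \<longlonglongrightarrow> \<bar>f n (m t) - g (m t)\<bar> powr p * W t"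
            using p by (intro tendsto_mult_right tendsto_powr' tendsto_rabs tendsto_diff tendsto_const elim) auto
          then have "(\<lambda>k. ?u k t) \<longlonglongrightarrow> ennreal (\<bar>f n (m t) - g (m t)\<bar> powr p * W t)"
            by (rule tendsto_ennrealI)
          then show ?case by (simp add: lim_imp_Liminf)
        qed
        have "(\<integral>\<^sup>+ t. ennreal (\<bar>f n (m t) - g (m t)\<bar> powr p * W t) \<partial>?ME) = (\<integral>\<^sup>+ t. liminf (\<lambda>k. ?u k t) \<partial>?ME)"
          by (rule nn_integral_cong_AE[OF ae2])
        also have "\<dots> \<le> liminf (\<lambda>k. integral\<^sup>N ?ME (?u k))"
          by (rule nn_integral_liminf[OF um])
        also have "\<dots> \<le> ennreal e"
        proof (rule Liminf_le)
          show "eventually (\<lambda>k. integral\<^sup>N ?ME (?u k) \<le> ennreal e) sequentially"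
            unfolding eventually_at_top_linorder
          proof (intro exI allI impI)
            fix k assume k: "N \<le> k"
            have "r k \<ge> N" using seq_suble[OF rmono, of k] k by simp
            then have "rhoGpow W p (\<lambda>t. f n t - f (r k) t) < ennreal e" using N n by simp
            moreover have "integral\<^sup>N ?ME (?u k) \<le> rhoGpow W p (\<lambda>t. f n t - f (r k) t)"
              using idx_le_rho[OF i, of "\<lambda>t. f n t - f (r k) t" p W] by simp
            ultimately show "integral\<^sup>N ?ME (?u k) \<le> ennreal e" by simp
          qed
        qed simp
        finally show "(\<integral>\<^sup>+ t. ennreal (\<bar>f n (m t) - g (m t)\<bar> powr p * W t) * indicator E t \<partial>lebesgue) \<le> ennreal e"
          by (simp add: int_restrict[OF i])
      qed
    qed
  qed
  obtain N1 where N1: "\<And>n. n \<ge> N1 \<Longrightarrow> rhoGpow W p (\<lambda>t. f n t - g t) \<le> ennreal 1"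
    using main[of 1] by auto
  have gG: "g \<in> Gspace W p"
  proof -
    have "rhoGpow W p g \<le> ennreal (2 powr p) * (rhoGpow W p (f N1) + rhoGpow W p (\<lambda>t. f N1 t - g t))"
    proof (rule rho_tri[OF p assms(2) fm])
      show "(\<lambda>t. f N1 t - g t) \<in> borel_measurable M0" using fm gm by measurable
    qed auto
    also have "\<dots> < \<infinity>" using ffin[of N1] N1[of N1]
      proof -
      have "rhoGpow W p (\<lambda>t. f N1 t - g t) < \<infinity>" using N1[of N1] by (simp add: le_less_trans)
      then show ?thesis using ffin[of N1] by (simp add: ennreal_mult_less_top)
    qed
    finally show ?thesis using gm by (simp add: Gspace_def)
  qed
  have t0: "(\<lambda>n. enn2real (rhoGpow W p (\<lambda>t. f n t - g t))) \<longlonglongrightarrow> 0"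
  proof (rule LIMSEQ_I)
    fix s :: real assume s: "s > 0"
    then obtain N where N: "\<And>n. n \<ge> N \<Longrightarrow> rhoGpow W p (\<lambda>t. f n t - g t) \<le> ennreal (s/2)"
      using main[of "s/2"] by auto
    show "\<exists>no. \<forall>n\<ge>no. norm (enn2real (rhoGpow W p (\<lambda>t. f n t - g t)) - 0) < s"
    proof (intro exI allI impI)
      fix n assume "N \<le> n"
      then have "enn2real (rhoGpow W p (\<lambda>t. f n t - g t)) \<le> enn2real (ennreal (s/2))"
        using N by (intro enn2real_mono) auto
      then show "norm (enn2real (rhoGpow W p (\<lambda>t. f n t - g t)) - 0) < s" using s by simp
    qed
  qed
  have "(\<lambda>n. Gnorm W p (\<lambda>t. f n t - g t)) \<longlonglongrightarrow> 0"
    unfolding Gnorm_def using p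
    by (intro tendsto_zero_powrI[OF t0]) auto
  then show "\<exists>g \<in> Gspace W p. (\<lambda>n. Gnorm W p (\<lambda>t. f n t - g t)) \<longlonglongrightarrow> 0"
    using gG by blast
qed

end
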